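(* Let $L$ be an $r\times m$ matrix of integers of full rank $r$. There exist a finite set $\Lambda^*$ of positive real numbers and an integer $p_0$, both depending only on $L$, such that for every integer $p\ge p_0$ we have $\{\lambda(j): j/p\in J(L,p)\}\subset\Lambda^*$.
   Context: $\mathbb{T}=\mathbb{R}/\mathbb{Z}$, and $\mathbb{T}^m$ is identified with $[0,1)^m$ with coordinatewise addition mod 1. $\ker_{\mathbb{T}}L=\{x\in\mathbb{T}^m:Lx=0\}$ with normalized Haar probability measure $\mu_L$. For $j\in\mathbb{Z}_p^m$ with coordinates $j(i)\in\{0,\ldots,p-1\}$, $j/p=(j(1)/p,\ldots,j(m)/p)\in\mathbb{T}^m$, and $\lambda(j)=p^{m-r}\mu_L\big((j/p+[0,1/p)^m)\cap\ker_{\mathbb{T}}L\big)$. $J(L,p)=\{j/p:\ j\in\mathbb{Z}_p^m,\ \mu_L\big((j/p+[0,1/p)^m)\cap\ker_{\mathbb{T}}L\big)>0\}$. *)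

theory Defs
  imports "HOL-Analysis.Analysis" "HOL-Probability.Probability"
begin

text \<open>The torus T^m is identified with [0,1)^m; points are represented by
  vectors in real^'m, and addition on the torus is coordinatewise addition mod 1.\<close>

definition torus :: "(real^'m) set" where
  "torus = {x. \<forall>i. 0 \<le> x$i \<and> x$i < 1}"

definition tplus :: "real^'m \<Rightarrow> real^'m \<Rightarrow> real^'m" where
  "tplus a x = (\<chi> i. frac (a$i + x$i))"

definition realmat :: "int^'m^'r \<Rightarrow> real^'m^'r" where
  "realmat L = (\<chi> i j. real_of_int (L$i$j))"

text \<open>ker_T L = {x in T^m. Lx = 0 in T^r}, i.e. every coordinate of Lx is an integer.\<close>
definition torus_ker :: "int^'m^'r \<Rightarrow> (real^'m) set" where
  "torus_ker L = {x \<in> torus. \<forall>i. (realmat L *v x)$i \<in> \<int>}"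

text \<open>Normalized Haar probability measure on the compact group ker_T L, realised as a
  Borel measure on real^'m concentrated on ker_T L: the (unique) Borel probability measure
  carried by ker_T L that is invariant under all torus translations by elements of ker_T L.\<close>
definition haar_ker :: "int^'m^'r \<Rightarrow> (real^'m) measure" where
  "haar_ker L = (THE M. sets M = sets borel \<and> prob_space M \<and>
      emeasure M (torus_ker L) = 1 \<and>
      (\<forall>a\<in>torus_ker L. distr M borel (tplus a) = M))"

definition mu_L :: "int^'m^'r \<Rightarrow> (real^'m) set \<Rightarrow> real" where
  "mu_L L S = measure (haar_ker L) S"

definition Zp_grid :: "nat \<Rightarrow> (nat^'m) set" where
  "Zp_grid p = {j. \<forall>i. j$i < p}"

definition cell :: "nat \<Rightarrow> nat^'m \<Rightarrow> (real^'m) set" where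
  "cell p j = {x. \<forall>i. real (j$i) / real p \<le> x$i \<and> x$i < real (j$i) / real p + 1 / real p}"

definition lam :: "int^'m^'r \<Rightarrow> nat \<Rightarrow> nat^'m \<Rightarrow> real" where
  "lam L p j = real p ^ (CARD('m) - CARD('r)) * mu_L L (cell p j \<inter> torus_ker L)"

definition div_vec :: "nat^'m \<Rightarrow> nat \<Rightarrow> real^'m" where
  "div_vec j p = (\<chi> i. real (j$i) / real p)"

definition J_set :: "int^'m^'r \<Rightarrow> nat \<Rightarrow> (real^'m) set" where
  "J_set L p = {div_vec j p | j. j \<in> Zp_grid p \<and> mu_L L (cell p j \<inter> torus_ker L) > 0}"

end

theory Submission
  imports Defs
begin


lemma vec_nth_measurable[measurable]: "(\<lambda>x::real^'n. x$i) \<in> borel_measurable borel"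
  by (intro borel_measurable_continuous_onI continuous_intros)

lemma frac_measurable[measurable]: "(frac::real\<Rightarrow>real) \<in> borel_measurable borel"
  unfolding frac_def by measurable

lemma vec_measurable_iff:
  fixes f :: "'a \<Rightarrow> real^'n"
  shows "f \<in> borel_measurable M \<longleftrightarrow> (\<forall>i. (\<lambda>x. f x $ i) \<in> borel_measurable M)"
proof
  assume "f \<in> borel_measurable M" then show "\<forall>i. (\<lambda>x. f x $ i) \<in> borel_measurable M"
    by (auto intro: measurable_compose[OF _ vec_nth_measurable])
next
  assume "\<forall>i. (\<lambda>x. f x $ i) \<in> borel_measurable M"
  then show "f \<in> borel_measurable M"
    by (subst borel_measurable_euclidean_space) (auto simp: Basis_vec_def cart_eq_inner_axis[symmetric] inner_axis)
qed


definition fvec :: "real^'n \<Rightarrow> real^'n" where "fvec y = (\<chi> i. frac (y$i))"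

lemma tplus_fvec: "tplus a x = fvec (a + x)"
  by (simp add: tplus_def fvec_def)

definition shiftv :: "real^'n \<Rightarrow> 'n set \<Rightarrow> real^'n" where
  "shiftv a W = (\<chi> i. frac (a$i) - (if i \<in> W then 1 else 0))"
definition piece :: "real^'n \<Rightarrow> 'n set \<Rightarrow> (real^'n) set" where
  "piece a W = {x \<in> torus. \<forall>i. i \<in> W \<longleftrightarrow> 1 \<le> x$i + frac (a$i)}"
definition piece' :: "real^'n \<Rightarrow> 'n set \<Rightarrow> (real^'n) set" where
  "piece' a W = {y \<in> torus. \<forall>i. i \<in> W \<longleftrightarrow> y$i < frac (a$i)}"

lemma torus_sets[measurable]: "torus \<in> sets borel"
  unfolding torus_def by measurable

lemma piece_sets[measurable]: "piece a W \<in> sets borel" "piece' a W \<in> sets borel"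
  unfolding piece_def piece'_def by measurable

lemma tplus_piece: assumes "x \<in> piece a W" shows "tplus a x = x + shiftv a W"
proof -
  { fix i
    have f: "0 \<le> frac (a$i)" "frac (a$i) < 1" by (auto simp: frac_lt_1)
    have x: "0 \<le> x$i" "x$i < 1" "i \<in> W \<longleftrightarrow> 1 \<le> x$i + frac (a$i)"
      using assms by (auto simp: piece_def torus_def)
    have "frac (a$i + x$i) = frac (frac (a$i) + x$i)" by simp
    also have "\<dots> = x$i + (frac (a$i) - (if i \<in> W then 1 else 0))"
      using f x by (subst frac_unique_iff) auto
    finally have "frac (a$i + x$i) = x$i + (frac (a$i) - (if i \<in> W then 1 else 0))" . }
  then show ?thesis by (simp add: tplus_def shiftv_def vec_eq_iff)
qed

lemma piece_shift_iff: "x \<in> piece a W \<longleftrightarrow> x + shiftv a W \<in> piece' a W"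
proof -
  have *: "(0 \<le> x$i \<and> x$i < 1 \<and> (i \<in> W \<longleftrightarrow> 1 \<le> x$i + frac (a$i))) \<longleftrightarrow>
     (0 \<le> (x + shiftv a W)$i \<and> (x + shiftv a W)$i < 1 \<and> (i \<in> W \<longleftrightarrow> (x + shiftv a W)$i < frac (a$i)))" for i
  proof -
    define f where "f = frac (a$i)"
    have f: "0 \<le> f" "f < 1" by (simp_all add: frac_lt_1 f_def)
    have e: "(x + shiftv a W)$i = x$i + f - (if i\<in>W then 1 else 0)" by (simp add: shiftv_def f_def)
    show ?thesis unfolding e f_def[symmetric] using f by (cases "i \<in> W") auto
  qed
  show ?thesis
    unfolding piece_def piece'_def torus_def mem_Collect_eq using * by blast
qed

lemma piece_cover: "x \<in> torus \<Longrightarrow> x \<in> piece a {i. 1 \<le> x$i + frac (a$i)}"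
  by (auto simp: piece_def)
lemma piece'_cover: "x \<in> torus \<Longrightarrow> x \<in> piece' a {i. x$i < frac (a$i)}"
  by (auto simp: piece'_def)
lemma piece_disj: "x \<in> piece a W \<Longrightarrow> x \<in> piece a W' \<Longrightarrow> W = W'"
  by (auto simp: piece_def)
lemma piece'_disj: "x \<in> piece' a W \<Longrightarrow> x \<in> piece' a W' \<Longrightarrow> W = W'"
  by (auto simp: piece'_def)

lemma torus_split:
  assumes X: "X \<in> sets borel"
  shows "emeasure lborel (torus \<inter> X) = (\<Sum>W\<in>UNIV. emeasure lborel (piece a W \<inter> X))"
    and "emeasure lborel (torus \<inter> X) = (\<Sum>W\<in>UNIV. emeasure lborel (piece' a W \<inter> X))"
proof -
  have "torus \<inter> X = (\<Union>W\<in>UNIV. piece a W \<inter> X)"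
    using piece_cover[of _ a] by (auto simp: piece_def)
  moreover have "disjoint_family_on (\<lambda>W. piece a W \<inter> X) UNIV"
    unfolding disjoint_family_on_def using piece_disj by blast
  ultimately show "emeasure lborel (torus \<inter> X) = (\<Sum>W\<in>UNIV. emeasure lborel (piece a W \<inter> X))"
    using X by (simp add: sum_emeasure image_subset_iff)
next
  have "torus \<inter> X = (\<Union>W\<in>UNIV. piece' a W \<inter> X)"
    using piece'_cover[of _ a] by (auto simp: piece'_def)
  moreover have "disjoint_family_on (\<lambda>W. piece' a W \<inter> X) UNIV"
    unfolding disjoint_family_on_def using piece'_disj by blast
  ultimately show "emeasure lborel (torus \<inter> X) = (\<Sum>W\<in>UNIV. emeasure lborel (piece' a W \<inter> X))"
    using X by (simp add: sum_emeasure image_subset_iff)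
qed

lemma lborel_translate:
  fixes c :: "real^'n"
  assumes "S \<in> sets borel"
  shows "emeasure lborel ((\<lambda>x. x + c) -` S) = emeasure lborel S"
proof -
  have "emeasure lborel S = emeasure (distr lborel borel ((+) c)) S"
    by (simp add: lborel_distr_plus)
  also have "\<dots> = emeasure lborel ((+) c -` S)"
    using assms by (simp add: emeasure_distr)
  moreover have "(\<lambda>x. x + c) = (+) c" by (auto simp: add.commute)
  ultimately show ?thesis by simp
qed

lemma piece_translate:
  assumes "S \<in> sets borel"
  shows "emeasure lborel (piece a W \<inter> (\<lambda>x. x + shiftv a W) -` S) = emeasure lborel (piece' a W \<inter> S)"
proof -
  have "piece a W \<inter> (\<lambda>x. x + shiftv a W) -` S = (\<lambda>x. x + shiftv a W) -` (piece' a W \<inter> S)"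
    using piece_shift_iff by blast
  moreover have "piece' a W \<inter> S \<in> sets borel" using assms by measurable
  ultimately show ?thesis by (metis lborel_translate)
qed


lemma LA_split:
  fixes A :: "real^'m^'r"
  assumes "rank A = CARD('r)"
  obtains I :: "'m set" and R :: "real^'r^'m" where
    "card I = CARD('r)" "A ** R = mat 1" "\<And>i. i \<notin> I \<Longrightarrow> R$i = 0"
    "\<And>u. (\<And>i. i \<notin> I \<Longrightarrow> u$i = 0) \<Longrightarrow> A *v u = 0 \<Longrightarrow> u = 0"
proof -
  have "\<exists>B. A ** B = mat 1"
    using assms by (simp add: full_rank_surjective matrix_right_invertible_surjective)
  then have spanc: "span (columns A) = UNIV"
    by (simp add: matrix_right_invertible_span_columns span_vec_eq)
  obtain B where B: "B \<subseteq> columns A" "independent B" "columns A \<subseteq> span B"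
    by (rule maximal_independent_subset)
  have spanB: "span B = UNIV"
    using B(3) spanc span_mono[OF B(3)] by (auto simp: span_span)
  have finB: "finite B" using B(2) independent_explicit by blast
  have cardB: "card B = CARD('r)"
    using basis_card_eq_dim[of B UNIV] B(2) spanB by simp
  have "\<forall>b\<in>B. \<exists>i. column i A = b" using B(1) by (auto simp: columns_def)
  then obtain idx where idx: "\<And>b. b \<in> B \<Longrightarrow> column (idx b) A = b" by metis
  define I where "I = idx ` B"
  have inj: "inj_on idx B" by (rule inj_onI) (metis idx)
  have cardI: "card I = CARD('r)" using cardB inj by (simp add: I_def card_image)
  have colI: "\<And>i. i \<in> I \<Longrightarrow> column i A \<in> B \<and> idx (column i A) = i"
    using idx by (auto simp: I_def)
  have "\<forall>k. \<exists>c. (\<Sum>b\<in>B. c b *\<^sub>R b) = (axis k 1 :: real^'r)"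
  proof
    fix k
    have "(axis k 1 :: real^'r) \<in> span B" using spanB by simp
    then have "(axis k 1 :: real^'r) \<in> range (\<lambda>u. \<Sum>v\<in>B. u v *\<^sub>R v)"
      by (simp only: span_finite[OF finB])
    then obtain u where "(axis k 1 :: real^'r) = (\<Sum>v\<in>B. u v *\<^sub>R v)" by blast
    then show "\<exists>c. (\<Sum>b\<in>B. c b *\<^sub>R b) = (axis k 1 :: real^'r)" by (intro exI[of _ u]) simp
  qed
  from choice[OF this] obtain c where c0: "\<forall>k. (\<Sum>b\<in>B. c k b *\<^sub>R b) = (axis k 1 :: real^'r)" by blast
  then have c: "\<And>k. (\<Sum>b\<in>B. c k b *\<^sub>R b) = (axis k 1 :: real^'r)" by blast
  define R :: "real^'r^'m" where "R = (\<chi> i k. if i \<in> I then c k (column i A) else 0)"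
  have R0: "\<And>i. i \<notin> I \<Longrightarrow> R$i = 0" by (simp add: R_def vec_eq_iff)
  have AR: "A ** R = mat 1"
  proof -
    { fix r k
      have "(A ** R)$r$k = (\<Sum>i\<in>UNIV. A$r$i * R$i$k)" by (simp add: matrix_matrix_mult_def)
      also have "\<dots> = (\<Sum>i\<in>I. A$r$i * c k (column i A))"
        by (rule sum.mono_neutral_cong_right) (auto simp: R_def)
      also have "\<dots> = (\<Sum>b\<in>B. A$r$(idx b) * c k (column (idx b) A))"
        unfolding I_def by (rule sum.reindex[OF inj, unfolded o_def])
      also have "\<dots> = (\<Sum>b\<in>B. b$r * c k b)"
      proof (rule sum.cong[OF refl])
        fix b assume "b \<in> B"
        then have e: "column (idx b) A = b" by (rule idx)
        then have "A$r$(idx b) = b$r" by (metis column_def vec_lambda_beta)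
        then show "A$r$(idx b) * c k (column (idx b) A) = b$r * c k b" using e by simp
      qed
      also have "\<dots> = (axis k 1 :: real^'r)$r"
        by (simp add: c[symmetric] mult.commute)
      also have "\<dots> = (mat 1 :: real^'r^'r)$r$k"
        by (simp add: mat_def axis_def)
      finally have "(A ** R)$r$k = (mat 1 :: real^'r^'r)$r$k" . }
    then show ?thesis by (simp add: vec_eq_iff)
  qed
  have ind: "\<And>c. (\<Sum>v\<in>B. c v *\<^sub>R v) = 0 \<Longrightarrow> \<forall>v\<in>B. c v = 0"
    using B(2) by (simp add: independent_explicit)
  have injI: "u = 0" if u0: "\<And>i. i \<notin> I \<Longrightarrow> u$i = 0" and Au: "A *v u = 0" for u
  proof -
    have "A *v u = (\<Sum>i\<in>UNIV. u$i *\<^sub>R column i A)"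
      by (simp add: matrix_mult_sum scalar_mult_eq_scaleR)
    also have "\<dots> = (\<Sum>i\<in>I. u$i *\<^sub>R column i A)"
      by (rule sum.mono_neutral_cong_right) (auto simp: u0)
    also have "\<dots> = (\<Sum>b\<in>B. u$(idx b) *\<^sub>R column (idx b) A)"
      unfolding I_def by (rule sum.reindex[OF inj, unfolded o_def])
    also have "\<dots> = (\<Sum>b\<in>B. u$(idx b) *\<^sub>R b)"
      by (rule sum.cong[OF refl]) (simp add: idx)
    finally have "(\<Sum>b\<in>B. u$(idx b) *\<^sub>R b) = 0" using Au by simp
    then have "\<forall>b\<in>B. u$(idx b) = 0" by (rule ind)
    then have "\<forall>i. u$i = 0" using u0 unfolding I_def by (metis imageE)
    then show ?thesis by (simp add: vec_eq_iff)
  qed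
  show ?thesis using that[OF cardI AR R0 injI] by blast
qed


definition isint :: "real^'n \<Rightarrow> bool" where "isint y \<longleftrightarrow> (\<forall>k. y$k \<in> \<int>)"

lemma fvec_add_int: "isint n \<Longrightarrow> fvec (y + n) = fvec y"
  by (simp add: fvec_def isint_def vec_eq_iff frac_add_int_right)
lemma fvec_fvec_add: "fvec (fvec y + z) = fvec (y + z)" "fvec (z + fvec y) = fvec (z + y)"
  by (simp_all add: fvec_def vec_eq_iff)
lemma isint_diff_fvec: "isint (y - fvec y)"
  by (simp add: isint_def fvec_def frac_def)
lemma fvec_torus: "fvec y \<in> torus"
  by (simp add: torus_def fvec_def frac_lt_1)
lemma isint_add: "isint x \<Longrightarrow> isint y \<Longrightarrow> isint (x + y)"
  by (simp add: isint_def)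
lemma isint_diff: "isint x \<Longrightarrow> isint y \<Longrightarrow> isint (x - y)"
  by (simp add: isint_def)
lemma isint_0: "isint 0" by (simp add: isint_def)

lemma isint_mult_int:
  fixes L :: "int^'m^'r"
  assumes "isint n" shows "isint (realmat L *v n)"
  using assms unfolding isint_def
  by (auto simp: matrix_vector_mult_def realmat_def intro!: Ints_sum Ints_mult)

lemma finite_int_box: "finite {k::real^'n. \<forall>j. k$j \<in> \<int> \<and> \<bar>k$j\<bar> \<le> M}"
proof -
  let ?B = "Pi\<^sub>E UNIV (\<lambda>_::'n. {-\<lceil>M\<rceil>..\<lceil>M\<rceil>})"
  have "{k::real^'n. \<forall>j. k$j \<in> \<int> \<and> \<bar>k$j\<bar> \<le> M} \<subseteq> (\<lambda>f. \<chi> j. real_of_int (f j)) ` ?B"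
  proof
    fix k :: "real^'n" assume k: "k \<in> {k. \<forall>j. k$j \<in> \<int> \<and> \<bar>k$j\<bar> \<le> M}"
    define f where "f = (\<lambda>j. \<lfloor>k$j\<rfloor>)"
    have kj: "real_of_int (f j) = k$j" for j using k by (auto simp: f_def elim!: Ints_cases)
    have "f \<in> ?B"
    proof -
      have "\<bar>f j\<bar> \<le> \<lceil>M\<rceil>" for j
      proof -
        have "real_of_int \<bar>f j\<bar> \<le> real_of_int \<lceil>M\<rceil>"
        proof -
          have "\<bar>k$j\<bar> \<le> M" using k by auto
          then have "\<bar>k$j\<bar> \<le> real_of_int \<lceil>M\<rceil>" by (meson order_trans le_of_int_ceiling)
          then show ?thesis using kj[of j] by (simp only: of_int_abs)
        qed
        then show ?thesis by (simp only: of_int_le_iff)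
      qed
      then show ?thesis by (force simp: abs_le_iff)
    qed
    moreover have "k = (\<chi> j. real_of_int (f j))" using kj by (simp add: vec_eq_iff)
    ultimately show "k \<in> (\<lambda>f. \<chi> j. real_of_int (f j)) ` ?B" by blast
  qed
  moreover have "finite ?B" by (rule finite_PiE) auto
  ultimately show ?thesis by (rule finite_subset[OF _ finite_imageI])
qed

locale tsetup =
  fixes L :: "int^'m^'r" and I :: "'m set" and R :: "real^'r^'m"
  assumes LR: "realmat L ** R = mat 1"
    and R0: "\<And>i. i \<notin> I \<Longrightarrow> R$i = 0"
    and injI: "\<And>u. (\<And>i. i \<notin> I \<Longrightarrow> u$i = 0) \<Longrightarrow> realmat L *v u = 0 \<Longrightarrow> u = 0"
begin

abbreviation "A \<equiv> realmat L"

definition piv :: "real^'m \<Rightarrow> real^'m" where "piv x = (\<chi> i. if i \<in> I then 0 else x$i)"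
definition supp :: "real^'m \<Rightarrow> bool" where "supp u \<longleftrightarrow> (\<forall>i. i \<notin> I \<longrightarrow> u$i = 0)"
definition F0 :: "(real^'m) set" where "F0 = {u. u \<in> torus \<and> supp u \<and> isint (A *v u)}"
definition Q :: "real^'m \<Rightarrow> real^'m \<Rightarrow> real^'m" where
  "Q u x = fvec (piv x + u - R *v (A *v piv x))"
definition ind :: "'m set \<Rightarrow> real^'m" where "ind W = (\<chi> i. if i \<in> W then 1 else 0)"

lemma AR: "A *v (R *v y) = y"
  by (simp add: matrix_vector_mul_assoc LR)

lemma supp_R: "supp (R *v y)"
  by (simp add: supp_def matrix_vector_mult_def R0)

lemma RA_supp: assumes "supp u" shows "R *v (A *v u) = u"
proof -
  have "R *v (A *v u) - u = 0"
  proof (rule injI)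
    show "(R *v (A *v u) - u)$i = 0" if "i \<notin> I" for i
      using supp_R[of "A *v u"] assms that by (simp add: supp_def)
    show "A *v (R *v (A *v u) - u) = 0"
      by (simp add: matrix_vector_mult_diff_distrib AR)
  qed
  then show ?thesis by simp
qed

lemma Q_ker: "isint (A *v u) \<Longrightarrow> Q u x \<in> torus_ker L"
proof -
  assume iu: "isint (A *v u)"
  let ?y = "piv x + u - R *v (A *v piv x)"
  have "A *v ?y = A *v u"
    by (simp add: matrix_vector_right_distrib matrix_vector_mult_diff_distrib AR)
  moreover have "A *v Q u x = A *v ?y - A *v (?y - fvec ?y)"
    by (simp add: Q_def matrix_vector_mult_diff_distrib)
  ultimately have "isint (A *v Q u x)"
    using iu isint_mult_int[OF isint_diff_fvec, of L ?y] by (simp add: isint_diff)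
  then show ?thesis
    by (simp add: torus_ker_def isint_def Q_def fvec_torus)
qed

lemma isint_ind: "isint (ind W)" by (simp add: isint_def ind_def)
lemma isint_piv: "isint y \<Longrightarrow> isint (piv y)" by (simp add: isint_def piv_def)

lemma piv_add: "piv (x + y) = piv x + piv y" and piv_diff: "piv (x - y) = piv x - piv y"
  by (simp_all add: piv_def vec_eq_iff)

definition bW :: "real^'m \<Rightarrow> 'm set \<Rightarrow> real^'m" where
  "bW a W = (a - piv a) + R *v (A *v piv a) - R *v (A *v piv (ind W))"

definition tau :: "real^'m \<Rightarrow> 'm set \<Rightarrow> real^'m \<Rightarrow> real^'m" where
  "tau a W u = fvec (u + bW a W)"

lemma shiftv_torus: "a \<in> torus \<Longrightarrow> shiftv a W = a - ind W"
  by (simp add: shiftv_def torus_def ind_def vec_eq_iff)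

lemma Q_shift:
  assumes "a \<in> torus"
  shows "Q (tau a W u) (x + shiftv a W) = tplus a (Q u x)"
proof -
  let ?n = "(u + bW a W) - fvec (u + bW a W)"
  have n: "isint ?n" by (rule isint_diff_fvec)
  have "Q (tau a W u) (x + shiftv a W) =
     fvec (piv x + piv a - piv (ind W) + ((u + bW a W) - ?n) - R *v (A *v (piv x + piv a - piv (ind W))))"
    using assms by (simp add: Q_def tau_def shiftv_torus piv_add piv_diff diff_add_eq add_diff_eq add.assoc)
  also have "\<dots> = fvec ((a + (piv x + u - R *v (A *v piv x))) + (- piv (ind W) - ?n))"
  proof -
    have d: "R *v (A *v (piv x + piv a - piv (ind W))) = R *v (A *v piv x) + R *v (A *v piv a) - R *v (A *v piv (ind W))"
      by (simp add: matrix_vector_right_distrib matrix_vector_mult_diff_distrib)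
    have g: "\<And>(p::real^'m) q r u a s t n X. p + q - r + ((u + (a - q + s - t)) - n) - (X + s - t) = (a + (p + u - X)) + (- r - n)"
      by (simp add: algebra_simps)
    show ?thesis unfolding d bW_def by (rule arg_cong[where f=fvec], rule g)
  qed
  also have "\<dots> = fvec (a + (piv x + u - R *v (A *v piv x)))"
    using n isint_piv[OF isint_ind] by (intro fvec_add_int) (simp add: isint_def)
  also have "\<dots> = tplus a (Q u x)"
    by (simp add: tplus_fvec Q_def fvec_fvec_add)
  finally show ?thesis .
qed

end


lemma fvec_measurable[measurable]: "fvec \<in> borel_measurable borel"
  by (subst vec_measurable_iff) (auto simp: fvec_def intro: measurable_compose[OF vec_nth_measurable frac_measurable])

lemma mv_measurable[measurable]: "(\<lambda>x. (M::real^'n^'k) *v x) \<in> borel_measurable borel"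
  by (intro borel_measurable_continuous_onI linear_continuous_on matrix_vector_mul_bounded_linear)

lemma tplus_measurable[measurable]: "tplus a \<in> borel_measurable borel"
  unfolding tplus_fvec[abs_def] by measurable

definition LT :: "(real^'m) measure" where "LT = density lborel (indicator torus)"

lemma sets_LT[simp, measurable_cong]: "sets LT = sets borel" and space_LT[simp]: "space LT = UNIV"
  by (simp_all add: LT_def)

lemma emeasure_LT: "X \<in> sets borel \<Longrightarrow> emeasure LT X = emeasure lborel (torus \<inter> X)"
  unfolding LT_def
  by (subst emeasure_density) (auto simp: indicator_inter_arith[symmetric] intro!: nn_integral_indicator)

lemma emeasure_torus: "emeasure lborel (torus :: (real^'m) set) = 1"
proof -
  have b1: "box 0 (vec 1::real^'m) \<subseteq> torus"
  proof
    fix x :: "real^'m" assume "x \<in> box 0 (vec 1)"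
    then have "\<forall>i. 0 < x$i \<and> x$i < 1" by (simp add: mem_box_cart)
    then show "x \<in> torus" by (simp add: torus_def less_imp_le)
  qed
  have b2: "torus \<subseteq> cbox 0 (vec 1::real^'m)"
  proof
    fix x :: "real^'m" assume "x \<in> torus"
    then have "\<forall>i. 0 \<le> x$i \<and> x$i < 1" by (simp add: torus_def)
    then show "x \<in> cbox 0 (vec 1)" by (simp add: mem_box_cart less_imp_le)
  qed
  have e1: "emeasure lborel (box 0 (vec 1::real^'m)) = 1"
    by (auto simp: emeasure_lborel_box_eq Basis_vec_def inner_axis intro!: prod.neutral)
  have e2: "emeasure lborel (cbox 0 (vec 1::real^'m)) = 1"
    by (auto simp: emeasure_lborel_cbox_eq Basis_vec_def inner_axis intro!: prod.neutral)
  show ?thesis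
    using emeasure_mono[OF b1, of lborel] emeasure_mono[OF b2, of lborel] e1 e2
    by (simp add: torus_sets)
qed

lemma prob_LT: "prob_space LT"
  by (rule prob_spaceI) (simp add: emeasure_LT emeasure_torus)

context tsetup
begin

lemma supp_fvec: "supp y \<Longrightarrow> supp (fvec y)"
  by (simp add: supp_def fvec_def)
lemma supp_add: "supp x \<Longrightarrow> supp y \<Longrightarrow> supp (x + y)" and supp_diff: "supp x \<Longrightarrow> supp y \<Longrightarrow> supp (x - y)"
  by (simp_all add: supp_def)
lemma supp_a_piv: "supp (a - piv a)"
  by (simp add: supp_def piv_def)

lemma zero_F0: "0 \<in> F0"
  by (simp add: F0_def torus_def supp_def isint_def)

lemma finite_F0: "finite F0"
proof -
  define M where "M = (\<Sum>j\<in>UNIV. \<Sum>i\<in>UNIV. \<bar>A$j$i\<bar>)"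
  have "F0 \<subseteq> (\<lambda>k. R *v k) ` {k. \<forall>j. k$j \<in> \<int> \<and> \<bar>k$j\<bar> \<le> M}"
  proof
    fix u assume u: "u \<in> F0"
    then have u1: "supp u" "isint (A *v u)" "u \<in> torus" by (auto simp: F0_def)
    have "\<bar>(A *v u)$j\<bar> \<le> M" for j
    proof -
      have "\<bar>(A *v u)$j\<bar> = \<bar>\<Sum>i\<in>UNIV. A$j$i * u$i\<bar>" by (simp add: matrix_vector_mult_def)
      also have "\<dots> \<le> (\<Sum>i\<in>UNIV. \<bar>A$j$i * u$i\<bar>)" by (rule sum_abs)
      also have "\<dots> \<le> (\<Sum>i\<in>UNIV. \<bar>A$j$i\<bar>)"
      proof (rule sum_mono)
        fix i
        have "0 \<le> u$i" "u$i < 1" using u1(3) by (auto simp: torus_def)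
        then have "\<bar>u$i\<bar> \<le> 1" by simp
        then show "\<bar>A$j$i * u$i\<bar> \<le> \<bar>A$j$i\<bar>"
          by (simp add: abs_mult mult_left_le)
      qed
      also have "\<dots> \<le> M" unfolding M_def
        by (rule member_le_sum) (auto intro: sum_nonneg)
      finally show ?thesis .
    qed
    then have "A *v u \<in> {k. \<forall>j. k$j \<in> \<int> \<and> \<bar>k$j\<bar> \<le> M}" using u1(2) by (auto simp: isint_def)
    moreover have "u = R *v (A *v u)" using RA_supp[OF u1(1)] by simp
    ultimately show "u \<in> (\<lambda>k. R *v k) ` {k. \<forall>j. k$j \<in> \<int> \<and> \<bar>k$j\<bar> \<le> M}" by blast
  qed
  then show ?thesis using finite_int_box by (rule finite_subset[OF _ finite_imageI])
qed

lemma tau_F0: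
  assumes a: "a \<in> torus_ker L" and u: "u \<in> F0"
  shows "tau a W u \<in> F0"
proof -
  have u1: "supp u" "isint (A *v u)" using u by (auto simp: F0_def)
  have sb: "supp (bW a W)" unfolding bW_def
    by (intro supp_add supp_diff supp_a_piv supp_R)
  let ?y = "u + bW a W"
  have "A *v ?y = A *v u + A *v a - A *v piv (ind W)"
    by (simp add: bW_def matrix_vector_right_distrib matrix_vector_mult_diff_distrib AR)
  moreover have "isint (A *v a)" using a by (simp add: torus_ker_def isint_def)
  ultimately have iy: "isint (A *v ?y)"
    using u1(2) isint_mult_int[OF isint_piv[OF isint_ind], of L] by (simp add: isint_add isint_diff)
  have "A *v fvec ?y = A *v ?y - A *v (?y - fvec ?y)"
    by (simp add: matrix_vector_mult_diff_distrib)
  then have "isint (A *v fvec ?y)"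
    using iy isint_mult_int[OF isint_diff_fvec, of L ?y] by (simp add: isint_diff)
  then show ?thesis
    using supp_fvec[OF supp_add[OF u1(1) sb]] by (simp add: F0_def tau_def fvec_torus)
qed

lemma tau_inj: "inj_on (tau a W) torus"
proof
  fix u v assume u: "u \<in> torus" and v: "v \<in> torus" and e: "tau a W u = tau a W v"
  { fix i
    have "frac (u$i + bW a W $i) = frac (v$i + bW a W $i)"
      using e by (simp add: tau_def fvec_def vec_eq_iff)
    then obtain n where n: "u$i + bW a W $i = v$i + bW a W $i + of_int n" by (rule frac_eqE)
    have "0 \<le> u$i" "u$i < 1" "0 \<le> v$i" "v$i < 1" using u v by (auto simp: torus_def)
    with n have "u$i - v$i = of_int n" "- 1 < u$i - v$i" "u$i - v$i < 1" by auto
    then have "real_of_int (-1) < real_of_int n" "real_of_int n < real_of_int 1" by simp_all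
    then have "-1 < n" "n < 1" by (simp only: of_int_less_iff)+
    then have "n = 0" by simp
    with n have "u$i = v$i" by simp }
  then show "u = v" by (simp add: vec_eq_iff)
qed

lemma tau_bij: assumes "a \<in> torus_ker L" shows "bij_betw (tau a W) F0 F0"
proof -
  have inj: "inj_on (tau a W) F0" using tau_inj by (rule inj_on_subset) (auto simp: F0_def)
  have "tau a W ` F0 \<subseteq> F0" using tau_F0[OF assms] by blast
  then have "tau a W ` F0 = F0" by (rule endo_inj_surj[OF finite_F0 _ inj])
  then show ?thesis using inj by (simp add: bij_betw_def)
qed

lemma piv_measurable[measurable]: "piv \<in> borel_measurable borel"
  by (subst vec_measurable_iff) (auto simp: piv_def)

lemma Q_measurable[measurable]: "Q u \<in> borel_measurable borel"
  unfolding Q_def[abs_def] by measurable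

definition "UC = uniform_count_measure F0"
definition "\<Omega> = UC \<Otimes>\<^sub>M LT"
definition "mu0 = distr \<Omega> borel (\<lambda>(u, x). Q u x)"

lemma QQ_measurable[measurable]: "(\<lambda>(u, x). Q u x) \<in> \<Omega> \<rightarrow>\<^sub>M borel"
proof -
  have "(\<lambda>(u, x). Q u x) \<in> count_space F0 \<Otimes>\<^sub>M LT \<rightarrow>\<^sub>M borel"
    by (rule measurable_pair_measure_countable1) (auto simp: countable_finite[OF finite_F0])
  moreover have eq: "sets (UC \<Otimes>\<^sub>M LT) = sets (count_space F0 \<Otimes>\<^sub>M LT)"
    by (rule sets_pair_measure_cong) (simp_all add: UC_def sets_uniform_count_measure_count_space)
  ultimately show ?thesis
    unfolding \<Omega>_def by (subst measurable_cong_sets[OF eq refl])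
qed

lemma sets_mu0[simp]: "sets mu0 = sets borel" and space_mu0[simp]: "space mu0 = UNIV"
  by (simp_all add: mu0_def)

lemma emeasure_mu0:
  assumes S: "S \<in> sets borel"
  shows "emeasure mu0 S = (\<Sum>u\<in>F0. ennreal (1 / real (card F0)) * emeasure lborel (torus \<inter> Q u -` S))"
proof -
  interpret LT: prob_space LT by (rule prob_LT)
  have m: "(\<lambda>(u, x). Q u x) -` S \<inter> space \<Omega> \<in> sets \<Omega>"
    using S by measurable
  have "emeasure mu0 S = emeasure \<Omega> ((\<lambda>(u, x). Q u x) -` S \<inter> space \<Omega>)"
    unfolding mu0_def using S by (simp add: emeasure_distr)
  also have "\<dots> = (\<integral>\<^sup>+u. emeasure LT (Pair u -` ((\<lambda>(u, x). Q u x) -` S \<inter> space \<Omega>)) \<partial>UC)"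
    using m unfolding \<Omega>_def by (rule LT.emeasure_pair_measure_alt)
  also have "\<dots> = (\<Sum>u\<in>F0. ennreal (1 / real (card F0)) * emeasure LT (Pair u -` ((\<lambda>(u, x). Q u x) -` S \<inter> space \<Omega>)))"
    unfolding UC_def uniform_count_measure_def
    by (rule nn_integral_point_measure_finite[OF finite_F0])
  also have "\<dots> = (\<Sum>u\<in>F0. ennreal (1 / real (card F0)) * emeasure lborel (torus \<inter> Q u -` S))"
  proof (rule sum.cong[OF refl])
    fix u assume u: "u \<in> F0"
    have "Pair u -` ((\<lambda>(u, x). Q u x) -` S \<inter> space \<Omega>) = Q u -` S"
      using u by (auto simp: \<Omega>_def UC_def space_pair_measure space_uniform_count_measure)
    moreover have "Q u -` S \<in> sets borel" using measurable_sets[OF Q_measurable S] by simp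
    ultimately show "ennreal (1 / real (card F0)) * emeasure LT (Pair u -` ((\<lambda>(u, x). Q u x) -` S \<inter> space \<Omega>)) =
      ennreal (1 / real (card F0)) * emeasure lborel (torus \<inter> Q u -` S)"
      by (simp add: emeasure_LT)
  qed
  finally show ?thesis .
qed

lemma prob_mu0: "prob_space mu0"
proof -
  have "prob_space UC" unfolding UC_def
    by (rule prob_space_uniform_count_measure[OF finite_F0]) (use zero_F0 in blast)
  then have "prob_space \<Omega>" unfolding \<Omega>_def by (rule prob_space_pair[OF _ prob_LT])
  then show ?thesis unfolding mu0_def by (rule prob_space.prob_space_distr) measurable
qed

lemma mu0_ker: "emeasure mu0 (torus_ker L) = 1"
proof -
  have "prob_space UC" unfolding UC_def
    by (rule prob_space_uniform_count_measure[OF finite_F0]) (use zero_F0 in blast)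
  then interpret O: prob_space \<Omega> unfolding \<Omega>_def by (rule prob_space_pair[OF _ prob_LT])
  have "(\<lambda>(u, x). Q u x) -` torus_ker L \<inter> space \<Omega> = space \<Omega>"
    by (auto simp: \<Omega>_def UC_def space_pair_measure space_uniform_count_measure F0_def Q_ker)
  moreover have "torus_ker L \<in> sets borel"
  proof -
    have "torus_ker L = {x \<in> torus. \<forall>i. frac ((A *v x)$i) = 0}"
      by (simp add: torus_ker_def)
    also have "\<dots> \<in> sets borel" by measurable
    finally show ?thesis .
  qed
  ultimately show ?thesis unfolding mu0_def by (simp add: emeasure_distr O.emeasure_space_1)
qed

end


lemma AE_K:
  assumes "prob_space M" "K \<in> sets M" "emeasure M K = 1"
  shows "AE x in M. x \<in> K"
proof -
  interpret prob_space M by fact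
  have "prob K = 1" using assms(3) by (simp add: measure_def)
  then show ?thesis using prob_eq_1[OF assms(2)] by simp
qed

lemma tplus_comm: "tplus a x = tplus x a"
  by (simp add: tplus_def add.commute)

lemma haar_unique:
  fixes M N :: "(real^'m) measure"
  assumes sM: "sets M = sets borel" and pM: "prob_space M" and kM: "emeasure M K = 1"
    and iM: "\<forall>a\<in>K. distr M borel (tplus a) = M"
    and sN: "sets N = sets borel" and pN: "prob_space N" and kN: "emeasure N K = 1"
    and iN: "\<forall>a\<in>K. distr N borel (tplus a) = N"
    and K: "K \<in> sets borel"
  shows "M = N"
proof (rule measure_eqI)
  show "sets M = sets N" using sM sN by simp
  fix A assume "A \<in> sets M"
  then have A[measurable]: "A \<in> sets borel" using sM by simp
  interpret M: prob_space M by fact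
  interpret N: prob_space N by fact
  interpret MN: pair_sigma_finite M N by unfold_locales
  have spM: "space M = UNIV" using sets_eq_imp_space_eq[OF sM] by simp
  have spN: "space N = UNIV" using sets_eq_imp_space_eq[OF sN] by simp
  have aeN: "AE y in N. y \<in> K" using AE_K[OF pN _ kN] K sN by simp
  have aeM: "AE x in M. x \<in> K" using AE_K[OF pM _ kM] K sM by simp
  have tA: "tplus a -` A \<in> sets borel" for a
    using measurable_sets[OF tplus_measurable A, of a] by simp
  have mtM: "tplus y \<in> measurable M borel" for y
    by (subst measurable_cong_sets[OF sM refl]) (rule tplus_measurable)
  have mtN: "tplus y \<in> measurable N borel" for y
    by (subst measurable_cong_sets[OF sN refl]) (rule tplus_measurable)
  have eqM: "emeasure M (tplus y -` A) = emeasure M A" if "y \<in> K" for y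
  proof -
    have "emeasure M A = emeasure (distr M borel (tplus y)) A" using iM that by simp
    also have "\<dots> = emeasure M (tplus y -` A \<inter> space M)"
      by (rule emeasure_distr[OF mtM A])
    also have "\<dots> = emeasure M (tplus y -` A)" by (simp add: spM)
    finally show ?thesis by simp
  qed
  have eqN: "emeasure N (tplus y -` A) = emeasure N A" if "y \<in> K" for y
  proof -
    have "emeasure N A = emeasure (distr N borel (tplus y)) A" using iN that by simp
    also have "\<dots> = emeasure N (tplus y -` A \<inter> space N)"
      by (rule emeasure_distr[OF mtN A])
    also have "\<dots> = emeasure N (tplus y -` A)" by (simp add: spN)
    finally show ?thesis by simp
  qed
  have meas: "(\<lambda>(x, y). indicator A (tplus y x) :: ennreal) \<in> borel_measurable (M \<Otimes>\<^sub>M N)"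
  proof -
    have eq: "sets (M \<Otimes>\<^sub>M N) = sets (borel \<Otimes>\<^sub>M borel)"
      by (rule sets_pair_measure_cong[OF sM sN])
    have m2: "(\<lambda>(x, y). indicator A (tplus y x) :: ennreal) \<in> borel_measurable (borel \<Otimes>\<^sub>M borel)"
      unfolding tplus_fvec by measurable
    show ?thesis using m2 by (subst measurable_cong_sets[OF eq refl])
  qed
  have "emeasure M A = (\<integral>\<^sup>+y. emeasure M A \<partial>N)"
    by (simp add: N.emeasure_space_1)
  also have "\<dots> = (\<integral>\<^sup>+y. emeasure M (tplus y -` A) \<partial>N)"
    by (rule nn_integral_cong_AE) (use aeN in \<open>auto simp: eqM\<close>)
  also have "\<dots> = (\<integral>\<^sup>+y. (\<integral>\<^sup>+x. indicator A (tplus y x) \<partial>M) \<partial>N)"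
  proof (rule nn_integral_cong)
    fix y
    have "(\<integral>\<^sup>+x. indicator A (tplus y x) \<partial>M) = (\<integral>\<^sup>+x. indicator (tplus y -` A) x \<partial>M)"
      by (simp add: indicator_def)
    also have "\<dots> = emeasure M (tplus y -` A)"
      using tA[of y] sM by simp
    finally show "emeasure M (tplus y -` A) = (\<integral>\<^sup>+x. indicator A (tplus y x) \<partial>M)" by simp
  qed
  also have "\<dots> = (\<integral>\<^sup>+x. (\<integral>\<^sup>+y. indicator A (tplus y x) \<partial>N) \<partial>M)"
    using meas by (rule MN.Fubini')
  also have "\<dots> = (\<integral>\<^sup>+x. emeasure N (tplus x -` A) \<partial>M)"
  proof (rule nn_integral_cong)
    fix x
    have "(\<integral>\<^sup>+y. indicator A (tplus y x) \<partial>N) = (\<integral>\<^sup>+y. indicator (tplus x -` A) y \<partial>N)"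
      by (simp add: indicator_def tplus_comm[of _ x])
    also have "\<dots> = emeasure N (tplus x -` A)"
      using tA[of x] sN by simp
    finally show "(\<integral>\<^sup>+y. indicator A (tplus y x) \<partial>N) = emeasure N (tplus x -` A)" .
  qed
  also have "\<dots> = (\<integral>\<^sup>+x. emeasure N A \<partial>M)"
    by (rule nn_integral_cong_AE) (use aeM in \<open>auto simp: eqN\<close>)
  also have "\<dots> = emeasure N A"
    by (simp add: M.emeasure_space_1)
  finally show "emeasure M A = emeasure N A" .
qed

context tsetup
begin

lemma sum_inv:
  assumes a: "a \<in> torus_ker L" and S: "S \<in> sets borel"
  shows "(\<Sum>u\<in>F0. emeasure lborel (torus \<inter> Q u -` (tplus a -` S))) = (\<Sum>u\<in>F0. emeasure lborel (torus \<inter> Q u -` S))"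
proof -
  have at: "a \<in> torus" using a by (simp add: torus_ker_def)
  have mQ: "Q u -` X \<in> sets borel" if "X \<in> sets borel" for u X
    using measurable_sets[OF Q_measurable that, of u] by simp
  have tS: "tplus a -` S \<in> sets borel"
    using measurable_sets[OF tplus_measurable S, of a] by simp
  have "(\<Sum>u\<in>F0. emeasure lborel (torus \<inter> Q u -` (tplus a -` S))) =
        (\<Sum>u\<in>F0. \<Sum>W\<in>UNIV. emeasure lborel (piece a W \<inter> Q u -` (tplus a -` S)))"
    by (rule sum.cong[OF refl], rule torus_split(1), rule mQ[OF tS])
  also have "\<dots> = (\<Sum>u\<in>F0. \<Sum>W\<in>UNIV. emeasure lborel (piece a W \<inter> (\<lambda>x. x + shiftv a W) -` (Q (tau a W u) -` S)))"
  proof (intro sum.cong refl arg_cong[where f="emeasure lborel"])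
    fix u W
    show "piece a W \<inter> Q u -` (tplus a -` S) = piece a W \<inter> (\<lambda>x. x + shiftv a W) -` (Q (tau a W u) -` S)"
      using Q_shift[OF at, of W u] by auto
  qed
  also have "\<dots> = (\<Sum>u\<in>F0. \<Sum>W\<in>UNIV. emeasure lborel (piece' a W \<inter> Q (tau a W u) -` S))"
    by (intro sum.cong refl piece_translate mQ S)
  also have "\<dots> = (\<Sum>W\<in>UNIV. \<Sum>u\<in>F0. emeasure lborel (piece' a W \<inter> Q (tau a W u) -` S))"
    by (rule sum.swap)
  also have "\<dots> = (\<Sum>W\<in>UNIV. \<Sum>u\<in>F0. emeasure lborel (piece' a W \<inter> Q u -` S))"
  proof (rule sum.cong[OF refl])
    fix W
    show "(\<Sum>u\<in>F0. emeasure lborel (piece' a W \<inter> Q (tau a W u) -` S)) = (\<Sum>u\<in>F0. emeasure lborel (piece' a W \<inter> Q u -` S))"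
      using sum.reindex_bij_betw[OF tau_bij[OF a, of W], of "\<lambda>u. emeasure lborel (piece' a W \<inter> Q u -` S)"] by simp
  qed
  also have "\<dots> = (\<Sum>u\<in>F0. \<Sum>W\<in>UNIV. emeasure lborel (piece' a W \<inter> Q u -` S))"
    by (rule sum.swap)
  also have "\<dots> = (\<Sum>u\<in>F0. emeasure lborel (torus \<inter> Q u -` S))"
    by (rule sum.cong[OF refl], rule torus_split(2)[symmetric], rule mQ[OF S])
  finally show ?thesis .
qed

lemma mu0_inv:
  assumes a: "a \<in> torus_ker L"
  shows "distr mu0 borel (tplus a) = mu0"
proof (rule measure_eqI)
  show "sets (distr mu0 borel (tplus a)) = sets mu0" by simp
  fix S assume "S \<in> sets (distr mu0 borel (tplus a))"
  then have S: "S \<in> sets borel" by simp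
  have tS: "tplus a -` S \<in> sets borel"
    using measurable_sets[OF tplus_measurable S, of a] by simp
  have "emeasure (distr mu0 borel (tplus a)) S = emeasure mu0 (tplus a -` S)"
    using S by (subst emeasure_distr) (auto simp: measurable_cong_sets[OF sets_mu0 refl])
  also have "\<dots> = (\<Sum>u\<in>F0. ennreal (1 / real (card F0)) * emeasure lborel (torus \<inter> Q u -` (tplus a -` S)))"
    by (rule emeasure_mu0[OF tS])
  also have "\<dots> = ennreal (1 / real (card F0)) * (\<Sum>u\<in>F0. emeasure lborel (torus \<inter> Q u -` (tplus a -` S)))"
    by (simp add: sum_distrib_left)
  also have "\<dots> = ennreal (1 / real (card F0)) * (\<Sum>u\<in>F0. emeasure lborel (torus \<inter> Q u -` S))"
    by (simp add: sum_inv[OF a S])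
  also have "\<dots> = emeasure mu0 S"
    by (simp add: emeasure_mu0[OF S] sum_distrib_left)
  finally show "emeasure (distr mu0 borel (tplus a)) S = emeasure mu0 S" .
qed

lemma ker_sets: "torus_ker L \<in> sets borel"
proof -
  have "torus_ker L = {x \<in> torus. \<forall>i. frac ((A *v x)$i) = 0}"
    by (simp add: torus_ker_def)
  also have "\<dots> \<in> sets borel" by measurable
  finally show ?thesis .
qed

lemma haar_eq: "haar_ker L = mu0"
  unfolding haar_ker_def
proof (rule the_equality)
  show "sets mu0 = sets borel \<and> prob_space mu0 \<and> emeasure mu0 (torus_ker L) = 1 \<and> (\<forall>a\<in>torus_ker L. distr mu0 borel (tplus a) = mu0)"
    using prob_mu0 mu0_ker mu0_inv by simp
  fix M assume "sets M = sets borel \<and> prob_space M \<and> emeasure M (torus_ker L) = 1 \<and> (\<forall>a\<in>torus_ker L. distr M borel (tplus a) = M)"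
  then show "M = mu0"
    using haar_unique[of M "torus_ker L" mu0] prob_mu0 mu0_ker mu0_inv ker_sets by auto
qed

end


lemma Basis_cart_image: "(Basis :: (real^'n) set) = (\<lambda>i. axis i 1) ` UNIV"
  by (auto simp: Basis_vec_def)

lemma inj_axis1: "inj (\<lambda>i::'n::finite. axis i (1::real))"
  by (auto simp: inj_on_def axis_eq_axis)

lemma lborel_diag:
  fixes d :: "'n::finite \<Rightarrow> real" and s :: "real^'n"
  assumes d: "\<And>i. d i \<noteq> 0" and X: "X \<in> sets borel"
  shows "emeasure lborel X = ennreal (\<Prod>i\<in>UNIV. \<bar>d i\<bar>) * emeasure lborel ((\<lambda>x. (\<chi> i. s$i + d i * x$i)) -` X)"
proof -
  define c :: "real^'n \<Rightarrow> real" where "c b = (\<Sum>i\<in>UNIV. d i * b$i)" for b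
  have caxis: "c (axis i 1) = d i" for i
    by (simp add: c_def axis_def if_distrib cong: if_cong)
  have c0: "\<And>b. b \<in> Basis \<Longrightarrow> c b \<noteq> 0"
    using d by (auto simp: Basis_cart_image caxis)
  define T where "T x = s + (\<Sum>b\<in>Basis. (c b * (x \<bullet> b)) *\<^sub>R b)" for x :: "real^'n"
  have T: "T x = (\<chi> i. s$i + d i * x$i)" for x
  proof -
    have "(\<Sum>b\<in>Basis. (c b * (x \<bullet> b)) *\<^sub>R b) = (\<Sum>i\<in>UNIV. (d i * x$i) *\<^sub>R axis i (1::real))"
      unfolding Basis_cart_image
      by (subst sum.reindex[OF inj_axis1]) (simp add: caxis cart_eq_inner_axis[symmetric] o_def)
    also have "\<dots> = (\<chi> i. d i * x$i)"
      by (simp add: vec_eq_iff axis_def if_distrib cong: if_cong)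
    finally show ?thesis by (simp add: T_def vec_eq_iff)
  qed
  have pr: "(\<Prod>b\<in>Basis. \<bar>c b\<bar>) = (\<Prod>i\<in>UNIV. \<bar>d i\<bar>)"
    unfolding Basis_cart_image by (subst prod.reindex[OF inj_axis1]) (simp add: caxis o_def)
  have Tm: "T \<in> borel_measurable borel" unfolding T_def by measurable
  have "lborel = density (distr lborel borel T) (\<lambda>_. (\<Prod>b\<in>Basis. \<bar>c b\<bar>))"
    unfolding T_def by (rule lborel_affine_euclidean) (rule c0)
  then have "emeasure lborel X = emeasure (density (distr lborel borel T) (\<lambda>_. ennreal (\<Prod>i\<in>UNIV. \<bar>d i\<bar>))) X"
    by (simp add: pr)
  also have "\<dots> = ennreal (\<Prod>i\<in>UNIV. \<bar>d i\<bar>) * emeasure (distr lborel borel T) X"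
    using X by (simp add: emeasure_density nn_integral_cmult_indicator)
  also have "\<dots> = ennreal (\<Prod>i\<in>UNIV. \<bar>d i\<bar>) * emeasure lborel (T -` X)"
    using X Tm by (simp add: emeasure_distr)
  finally show ?thesis by (simp add: T[abs_def])
qed


lemma frac_in_cell:
  fixes p y jj :: real
  assumes p: "0 < p" and j: "0 \<le> jj" "jj + 1 \<le> p"
  shows "(jj / p \<le> frac y \<and> frac y < jj / p + 1 / p) \<longleftrightarrow>
         (\<exists>n::int. 0 \<le> p*y - p*n - jj \<and> p*y - p*n - jj < 1)"
proof
  assume a: "jj / p \<le> frac y \<and> frac y < jj / p + 1 / p"
  have e: "p*y - p * of_int \<lfloor>y\<rfloor> - jj = p * frac y - jj" by (simp add: frac_def algebra_simps)
  have "jj \<le> p * frac y" "p * frac y < jj + 1" using a p by (auto simp: field_simps)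
  then show "\<exists>n::int. 0 \<le> p*y - p*n - jj \<and> p*y - p*n - jj < 1"
    by (intro exI[of _ "\<lfloor>y\<rfloor>"]) (simp add: e)
next
  assume "\<exists>n::int. 0 \<le> p*y - p*n - jj \<and> p*y - p*n - jj < 1"
  then obtain n :: int where n: "0 \<le> p*y - p*n - jj" "p*y - p*n - jj < 1" by blast
  have b: "jj / p \<le> y - n" "y - n < jj / p + 1 / p"
    using n p by (auto simp: field_simps)
  have "jj / p \<ge> 0" using j p by simp
  moreover have "jj / p + 1 / p \<le> 1" using j p by (simp add: field_simps)
  ultimately have "frac y = y - n"
    using b by (subst frac_unique_iff) auto
  then show "jj / p \<le> frac y \<and> frac y < jj / p + 1 / p" using b by simp
qed

lemma coordV:
  fixes p t jj :: real
  assumes p: "0 < p" and j: "0 \<le> jj" "jj + 1 \<le> p"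
  shows "(0 \<le> (jj + t)/p \<and> (jj + t)/p < 1 \<and> jj/p \<le> frac ((jj + t)/p) \<and> frac ((jj + t)/p) < jj/p + 1/p)
     \<longleftrightarrow> (0 \<le> t \<and> t < 1)"
proof
  assume a: "0 \<le> (jj + t)/p \<and> (jj + t)/p < 1 \<and> jj/p \<le> frac ((jj + t)/p) \<and> frac ((jj + t)/p) < jj/p + 1/p"
  then have "frac ((jj + t)/p) = (jj + t)/p" by (simp add: frac_eq)
  then have "jj/p \<le> (jj + t)/p" "(jj + t)/p < jj/p + 1/p" using a by auto
  then show "0 \<le> t \<and> t < 1" using p by (auto simp: field_simps)
next
  assume t: "0 \<le> t \<and> t < 1"
  have "0 \<le> (jj + t)/p" "(jj + t)/p < 1" using t p j by (auto simp: field_simps)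
  moreover have "frac ((jj + t)/p) = (jj + t)/p" using calculation by (simp add: frac_eq)
  moreover have "jj/p \<le> (jj + t)/p" "(jj + t)/p < jj/p + 1/p" using t p by (auto simp: field_simps)
  ultimately show "0 \<le> (jj + t)/p \<and> (jj + t)/p < 1 \<and> jj/p \<le> frac ((jj + t)/p) \<and> frac ((jj + t)/p) < jj/p + 1/p"
    by simp
qed


context tsetup begin

definition jr :: "nat^'m \<Rightarrow> real^'m" where "jr j = (\<chi> i. real (j$i))"
definition dd :: "nat \<Rightarrow> 'm \<Rightarrow> real" where "dd p i = (if i \<in> I then 1 else 1 / real p)"
definition Aff :: "nat \<Rightarrow> nat^'m \<Rightarrow> real^'m \<Rightarrow> real^'m" where
  "Aff p j t = (\<chi> i. (\<chi> i. if i \<in> I then 0 else real (j$i) / real p)$i + dd p i * t$i)"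
definition G :: "real^'m \<Rightarrow> real^'m" where "G t = R *v (A *v piv t)"
definition sv :: "nat \<Rightarrow> nat^'m \<Rightarrow> real^'m \<Rightarrow> real^'m" where
  "sv p j u = real p *\<^sub>R u - R *v (A *v piv (jr j)) - (jr j - piv (jr j))"
definition Econd :: "nat \<Rightarrow> nat^'m \<Rightarrow> real^'m \<Rightarrow> real^'m \<Rightarrow> bool" where
  "Econd p j u t \<longleftrightarrow> t \<in> torus \<and> (\<forall>i\<in>I. \<exists>n::int. 0 \<le> sv p j u $i - real p * n - G t $i \<and> sv p j u $i - real p * n - G t $i < 1)"

lemma E_char:
  assumes p: "0 < p" and j: "j \<in> Zp_grid p" and u: "u \<in> F0"
  shows "(Aff p j t \<in> torus \<and> Q u (Aff p j t) \<in> cell p j) \<longleftrightarrow> Econd p j u t"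
proof -
  let ?x = "Aff p j t"
  let ?g0 = "R *v (A *v piv (jr j))"
  have us: "supp u" using u by (simp add: F0_def)
  have pivx: "piv ?x = (1 / real p) *\<^sub>R (piv (jr j) + piv t)"
    using p by (simp add: piv_def Aff_def dd_def jr_def vec_eq_iff field_simps)
  have Rx: "R *v (A *v piv ?x) = (1 / real p) *\<^sub>R (?g0 + G t)"
    by (simp add: pivx G_def matrix_vector_mult_scaleR matrix_vector_right_distrib)
  have xI: "?x$i = t$i" if "i \<in> I" for i using that by (simp add: Aff_def dd_def)
  have xV: "?x$i = (real (j$i) + t$i) / real p" if "i \<notin> I" for i
    using that by (simp add: Aff_def dd_def add_divide_distrib)
  have QI: "Q u ?x $ i = frac (u$i - (?g0$i + G t$i) / real p)" if "i \<in> I" for i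
  proof -
    have "Q u ?x $ i = frac (piv ?x $ i + u$i - (R *v (A *v piv ?x))$i)" by (simp add: Q_def fvec_def)
    also have "piv ?x $ i = 0" using that by (simp add: piv_def)
    also have "(R *v (A *v piv ?x))$i = (?g0$i + G t$i) / real p" by (simp only: Rx) (simp add: add_divide_distrib)
    finally show ?thesis by simp
  qed
  have QV: "Q u ?x $ i = frac (?x$i)" if "i \<notin> I" for i
  proof -
    have "u$i = 0" using us that by (simp add: supp_def)
    moreover have "(R *v (A *v piv ?x))$i = 0" using supp_R that by (simp add: supp_def)
    ultimately show ?thesis using that by (simp add: Q_def fvec_def piv_def)
  qed
  have svI: "sv p j u $ i = real p * u$i - ?g0$i - real (j$i)" if "i \<in> I" for i
    using that by (simp add: sv_def piv_def jr_def)
  have jb: "0 \<le> real (j$i)" "real (j$i) + 1 \<le> real p" for i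
  proof -
    show "0 \<le> real (j$i)" by simp
    have "j$i < p" using j by (simp add: Zp_grid_def)
    then have "j$i + 1 \<le> p" by simp
    then have "real (j$i + 1) \<le> real p" by (simp only: of_nat_le_iff)
    then show "real (j$i) + 1 \<le> real p" by simp
  qed
  have coord: "(0 \<le> ?x$i \<and> ?x$i < 1 \<and> real (j$i) / real p \<le> Q u ?x $ i \<and> Q u ?x $ i < real (j$i) / real p + 1 / real p)
      \<longleftrightarrow> (0 \<le> t$i \<and> t$i < 1 \<and> (i \<in> I \<longrightarrow> (\<exists>n::int. 0 \<le> sv p j u $i - real p * n - G t $i \<and> sv p j u $i - real p * n - G t $i < 1)))" for i
  proof (cases "i \<in> I")
    case True
    have pp: "0 < real p" using p by simp
    have "(real (j$i) / real p \<le> frac (u$i - (?g0$i + G t$i) / real p) \<and> frac (u$i - (?g0$i + G t$i) / real p) < real (j$i) / real p + 1 / real p)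
        \<longleftrightarrow> (\<exists>n::int. 0 \<le> real p * (u$i - (?g0$i + G t$i) / real p) - real p * n - real (j$i) \<and> real p * (u$i - (?g0$i + G t$i) / real p) - real p * n - real (j$i) < 1)"
      by (rule frac_in_cell[OF pp jb(1)[of i] jb(2)[of i]])
    moreover have "real p * (u$i - (?g0$i + G t$i) / real p) - real p * n - real (j$i) = sv p j u $i - real p * n - G t $i" for n :: int
      using pp True by (simp add: svI field_simps)
    ultimately show ?thesis using True by (simp add: xI QI)
  next
    case False
    have pp: "0 < real p" using p by simp
    show ?thesis using False coordV[OF pp jb(1)[of i] jb(2)[of i], of "t$i"] by (simp add: xV QV)
  qed
  have "(?x \<in> torus \<and> Q u ?x \<in> cell p j) \<longleftrightarrow>
      (\<forall>i. 0 \<le> ?x$i \<and> ?x$i < 1 \<and> real (j$i) / real p \<le> Q u ?x $ i \<and> Q u ?x $ i < real (j$i) / real p + 1 / real p)"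
    by (auto simp: torus_def cell_def)
  also have "\<dots> \<longleftrightarrow> (\<forall>i. 0 \<le> t$i \<and> t$i < 1 \<and> (i \<in> I \<longrightarrow> (\<exists>n::int. 0 \<le> sv p j u $i - real p * n - G t $i \<and> sv p j u $i - real p * n - G t $i < 1)))"
    using coord by simp
  also have "\<dots> \<longleftrightarrow> Econd p j u t"
    by (auto simp: Econd_def torus_def)
  finally show ?thesis .
qed

end


definition mnorm :: "real^'n^'k \<Rightarrow> real" where "mnorm B = (\<Sum>i\<in>UNIV. \<Sum>l\<in>UNIV. \<bar>B$i$l\<bar>)"

lemma mnorm_nonneg: "0 \<le> mnorm B"
  by (simp add: mnorm_def sum_nonneg)

lemma mv_bound:
  assumes x: "\<And>l. \<bar>x$l\<bar> \<le> c"
  shows "\<bar>(B *v x)$i\<bar> \<le> mnorm B * c"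
proof -
  have c: "0 \<le> c" using x[of undefined] by simp
  have "\<bar>(B *v x)$i\<bar> = \<bar>\<Sum>l\<in>UNIV. B$i$l * x$l\<bar>" by (simp add: matrix_vector_mult_def)
  also have "\<dots> \<le> (\<Sum>l\<in>UNIV. \<bar>B$i$l * x$l\<bar>)" by (rule sum_abs)
  also have "\<dots> \<le> (\<Sum>l\<in>UNIV. \<bar>B$i$l\<bar> * c)"
    by (rule sum_mono) (simp add: abs_mult mult_left_mono x)
  also have "\<dots> = (\<Sum>l\<in>UNIV. \<bar>B$i$l\<bar>) * c" by (simp add: sum_distrib_right)
  also have "\<dots> \<le> mnorm B * c"
    unfolding mnorm_def by (rule mult_right_mono[OF member_le_sum c]) (auto intro: sum_nonneg)
  finally show ?thesis .
qed

lemma isint_scale_nat: "isint x \<Longrightarrow> isint (real p *\<^sub>R x)"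
  by (simp add: isint_def)

context tsetup begin

definition Tz :: "real^'m \<Rightarrow> (real^'m) set" where
  "Tz z = {t \<in> torus. \<forall>i\<in>I. 0 \<le> z$i - G t$i \<and> z$i - G t$i < 1}"
definition Zs :: "nat \<Rightarrow> nat^'m \<Rightarrow> real^'m \<Rightarrow> (real^'m) set" where
  "Zs p j u = {z. supp z \<and> (\<forall>i\<in>I. \<exists>n::int. z$i = sv p j u $i - real p * n) \<and> Tz z \<noteq> {}}"
definition Zfin :: "(real^'m) set" where
  "Zfin = {z. supp z \<and> isint (A *v z) \<and> Tz z \<noteq> {}}"

lemma G_measurable[measurable]: "G \<in> borel_measurable borel"
  unfolding G_def[abs_def] by measurable

lemma Tz_sets[measurable]: "Tz z \<in> sets borel"
  unfolding Tz_def by measurable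

lemma Econd_decomp: "{t. Econd p j u t} = (\<Union>z\<in>Zs p j u. Tz z)"
proof
  show "{t. Econd p j u t} \<subseteq> (\<Union>z\<in>Zs p j u. Tz z)"
  proof
    fix t assume "t \<in> {t. Econd p j u t}"
    then have t: "t \<in> torus" and c: "\<forall>i\<in>I. \<exists>n::int. 0 \<le> sv p j u $i - real p * n - G t $i \<and> sv p j u $i - real p * n - G t $i < 1"
      by (auto simp: Econd_def)
    from bchoice[OF c] obtain nf :: "'m \<Rightarrow> int" where nf: "\<forall>i\<in>I. 0 \<le> sv p j u $i - real p * nf i - G t $i \<and> sv p j u $i - real p * nf i - G t $i < 1"
      by blast
    define z where "z = (\<chi> i. if i \<in> I then sv p j u $i - real p * nf i else 0)"
    have tz: "t \<in> Tz z" using t nf by (simp add: Tz_def z_def)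
    moreover have "z \<in> Zs p j u"
      using tz by (auto simp: Zs_def z_def supp_def)
    ultimately show "t \<in> (\<Union>z\<in>Zs p j u. Tz z)" by blast
  qed
  show "(\<Union>z\<in>Zs p j u. Tz z) \<subseteq> {t. Econd p j u t}"
  proof
    fix t assume "t \<in> (\<Union>z\<in>Zs p j u. Tz z)"
    then obtain z where z: "z \<in> Zs p j u" and tz: "t \<in> Tz z" by blast
    have "\<exists>n::int. 0 \<le> sv p j u $i - real p * n - G t $i \<and> sv p j u $i - real p * n - G t $i < 1" if i: "i \<in> I" for i
    proof -
      obtain n :: int where n: "z$i = sv p j u $i - real p * n" using z i by (auto simp: Zs_def)
      then show ?thesis using tz i by (intro exI[of _ n]) (auto simp: Tz_def)
    qed
    then show "t \<in> {t. Econd p j u t}" using tz by (simp add: Econd_def Tz_def)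
  qed
qed

lemma Zs_disj:
  assumes p: "0 < p"
  shows "disjoint_family_on Tz (Zs p j u)"
  unfolding disjoint_family_on_def
proof (intro ballI impI)
  fix z1 z2 assume z1: "z1 \<in> Zs p j u" and z2: "z2 \<in> Zs p j u" and ne: "z1 \<noteq> z2"
  show "Tz z1 \<inter> Tz z2 = {}"
  proof (rule ccontr)
    assume "Tz z1 \<inter> Tz z2 \<noteq> {}"
    then obtain t where t1: "t \<in> Tz z1" and t2: "t \<in> Tz z2" by blast
    have "z1$i = z2$i" for i
    proof (cases "i \<in> I")
      case True
      obtain n1 :: int where n1: "z1$i = sv p j u $i - real p * n1" using z1 True by (auto simp: Zs_def)
      obtain n2 :: int where n2: "z2$i = sv p j u $i - real p * n2" using z2 True by (auto simp: Zs_def)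
      have "0 \<le> z1$i - G t$i" "z1$i - G t$i < 1" "0 \<le> z2$i - G t$i" "z2$i - G t$i < 1"
        using t1 t2 True by (auto simp: Tz_def)
      then have "\<bar>z1$i - z2$i\<bar> < 1" by (simp add: abs_less_iff)
      then have "\<bar>real p * real_of_int (n2 - n1)\<bar> < 1" using n1 n2 by (simp add: algebra_simps)
      moreover have "1 \<le> real p" using p by simp
      moreover have "\<bar>real_of_int (n2 - n1)\<bar> \<le> \<bar>real p * real_of_int (n2 - n1)\<bar>"
      proof -
        have "1 * \<bar>real_of_int (n2 - n1)\<bar> \<le> real p * \<bar>real_of_int (n2 - n1)\<bar>"
          using \<open>1 \<le> real p\<close> by (rule mult_right_mono) simp
        then show ?thesis by (simp add: abs_mult)
      qed
      ultimately have "\<bar>real_of_int (n2 - n1)\<bar> < 1" by linarith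
      then have "n2 - n1 = 0" by linarith
      then show ?thesis using n1 n2 by simp
    next
      case False
      then show ?thesis using z1 z2 by (simp add: Zs_def supp_def)
    qed
    then have "z1 = z2" by (simp add: vec_eq_iff)
    with ne show False by simp
  qed
qed

lemma supp_scale: "supp x \<Longrightarrow> supp (c *\<^sub>R x)" by (simp add: supp_def)

lemma isint_jr: "isint (jr j)" by (simp add: isint_def jr_def)

lemma Zs_Zfin: assumes u: "u \<in> F0" shows "Zs p j u \<subseteq> Zfin"
proof
  fix z assume z: "z \<in> Zs p j u"
  have us: "supp u" "isint (A *v u)" using u by (auto simp: F0_def)
  have ssv: "supp (sv p j u)" unfolding sv_def
    by (intro supp_diff supp_scale us(1) supp_R supp_a_piv)
  have "\<forall>i\<in>I. \<exists>n::int. z$i = sv p j u $i - real p * n" using z by (simp add: Zs_def)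
  from bchoice[OF this] obtain nf :: "'m \<Rightarrow> int" where nf: "\<forall>i\<in>I. z$i = sv p j u $i - real p * nf i" by blast
  define nv where "nv = (\<chi> i. if i \<in> I then real_of_int (nf i) else 0)"
  have zs: "supp z" using z by (simp add: Zs_def)
  have "z$i = (sv p j u - real p *\<^sub>R nv)$i" for i
  proof (cases "i \<in> I")
    case True then show ?thesis using nf by (simp add: nv_def)
  next
    case False then show ?thesis using zs ssv by (simp add: nv_def supp_def)
  qed
  then have zeq: "z = sv p j u - real p *\<^sub>R nv" by (simp add: vec_eq_iff)
  have inv: "isint nv" by (simp add: isint_def nv_def)
  have "A *v sv p j u = real p *\<^sub>R (A *v u) - A *v jr j"
    by (simp add: sv_def matrix_vector_mult_diff_distrib matrix_vector_mult_scaleR AR)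
  then have "isint (A *v sv p j u)"
    using isint_scale_nat[OF us(2), of p] isint_mult_int[OF isint_jr, of L] by (simp add: isint_diff)
  moreover have "isint (A *v (real p *\<^sub>R nv))"
    by (simp add: matrix_vector_mult_scaleR isint_scale_nat isint_mult_int[OF inv])
  ultimately have "isint (A *v z)"
    by (simp add: zeq matrix_vector_mult_diff_distrib isint_diff)
  then show "z \<in> Zfin" using z by (simp add: Zfin_def Zs_def)
qed

lemma finite_Zfin: "finite Zfin"
proof -
  define Mz where "Mz = mnorm R * mnorm A + 1"
  have Mz0: "0 \<le> Mz" by (simp add: Mz_def mnorm_nonneg)
  have Gb: "\<bar>G t $ i\<bar> \<le> mnorm R * mnorm A" if t: "t \<in> torus" for t i
  proof -
    have "\<bar>piv t $ l\<bar> \<le> 1" for l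
    proof -
      have "0 \<le> t$l" "t$l < 1" using t by (auto simp: torus_def)
      then show ?thesis by (simp add: piv_def)
    qed
    then have "\<bar>(A *v piv t) $ k\<bar> \<le> mnorm A * 1" for k by (rule mv_bound)
    then have "\<bar>(R *v (A *v piv t)) $ i\<bar> \<le> mnorm R * (mnorm A * 1)" by (rule mv_bound)
    then show ?thesis by (simp add: G_def)
  qed
  have "Zfin \<subseteq> (\<lambda>k. R *v k) ` {k. \<forall>l. k$l \<in> \<int> \<and> \<bar>k$l\<bar> \<le> mnorm A * Mz}"
  proof
    fix z assume z: "z \<in> Zfin"
    then obtain t where t: "t \<in> Tz z" and zs: "supp z" and zi: "isint (A *v z)" by (auto simp: Zfin_def)
    have "\<bar>z$i\<bar> \<le> Mz" for i
    proof (cases "i \<in> I")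
      case True
      then have "0 \<le> z$i - G t$i" "z$i - G t$i < 1" using t by (auto simp: Tz_def)
      moreover have "\<bar>G t $ i\<bar> \<le> mnorm R * mnorm A" using t Gb by (auto simp: Tz_def)
      ultimately show ?thesis by (simp add: Mz_def abs_le_iff)
    next
      case False
      then show ?thesis using zs Mz0 by (simp add: supp_def)
    qed
    then have "\<bar>(A *v z)$l\<bar> \<le> mnorm A * Mz" for l by (rule mv_bound)
    then have "A *v z \<in> {k. \<forall>l. k$l \<in> \<int> \<and> \<bar>k$l\<bar> \<le> mnorm A * Mz}" using zi by (simp add: isint_def)
    moreover have "z = R *v (A *v z)" using RA_supp[OF zs] by simp
    ultimately show "z \<in> (\<lambda>k. R *v k) ` {k. \<forall>l. k$l \<in> \<int> \<and> \<bar>k$l\<bar> \<le> mnorm A * Mz}" by blast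
  qed
  then show ?thesis using finite_int_box by (rule finite_subset[OF _ finite_imageI])
qed

lemma finite_Zs: "u \<in> F0 \<Longrightarrow> finite (Zs p j u)"
  using finite_subset[OF Zs_Zfin finite_Zfin] .

lemma Econd_measure:
  assumes p: "0 < p" and u: "u \<in> F0"
  shows "emeasure lborel {t. Econd p j u t} = (\<Sum>z\<in>Zs p j u. emeasure lborel (Tz z))"
  unfolding Econd_decomp
  by (rule sum_emeasure[symmetric]) (auto intro: Zs_disj[OF p] finite_Zs[OF u])

end


context tsetup begin

lemma cell_sets[measurable]: "cell p j \<in> sets borel"
  unfolding cell_def by measurable

lemma lam_formula:
  assumes cardI: "card I = CARD('r)" and p: "0 < p" and j: "j \<in> Zp_grid p"
  shows "lam L p j = enn2real (\<Sum>u\<in>F0. ennreal (1 / real (card F0)) * (\<Sum>z\<in>Zs p j u. emeasure lborel (Tz z)))"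
proof -
  define k where "k = CARD('m) - CARD('r)"
  define c where "c = ennreal (1 / real (card F0))"
  define s0 :: "real^'m" where "s0 = (\<chi> i. if i \<in> I then 0 else real (j$i) / real p)"
  have cm: "cell p j \<inter> torus_ker L \<in> sets borel" using ker_sets by measurable
  have affeq: "(\<lambda>x. (\<chi> i. s0$i + dd p i * x$i)) = Aff p j"
    by (rule ext) (simp add: Aff_def s0_def)
  have cardc: "card (- I) = k"
  proof -
    have "- I = UNIV - I" by auto
    then show ?thesis using cardI card_Diff_subset[of I UNIV] by (simp add: k_def)
  qed
  have prodd: "(\<Prod>i\<in>UNIV. \<bar>dd p i\<bar>) = (1 / real p) ^ k"
  proof -
    have "(\<Prod>i\<in>UNIV. \<bar>dd p i\<bar>) = (\<Prod>i\<in>UNIV. if i \<in> I then 1 else 1 / real p)"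
      by (rule prod.cong) (auto simp: dd_def)
    also have "\<dots> = (\<Prod>i\<in>UNIV \<inter> {i. i \<in> I}. 1) * (\<Prod>i\<in>UNIV \<inter> - {i. i \<in> I}. 1 / real p)"
      by (rule prod.If_cases) simp
    also have "\<dots> = (1 / real p) ^ card (- I)"
      by (simp add: Compl_eq)
    finally show ?thesis using cardc by simp
  qed
  have e3: "emeasure lborel (torus \<inter> Q u -` (cell p j \<inter> torus_ker L)) = ennreal ((1 / real p) ^ k) * emeasure lborel {t. Econd p j u t}"
    if u: "u \<in> F0" for u
  proof -
    have "torus \<inter> Q u -` (cell p j \<inter> torus_ker L) = torus \<inter> Q u -` cell p j"
      using Q_ker u by (auto simp: F0_def)
    moreover have X: "torus \<inter> Q u -` cell p j \<in> sets borel"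
      using measurable_sets[OF Q_measurable cell_sets, of u p j] by simp
    moreover have "dd p i \<noteq> 0" for i using p by (simp add: dd_def)
    ultimately have "emeasure lborel (torus \<inter> Q u -` (cell p j \<inter> torus_ker L)) =
      ennreal (\<Prod>i\<in>UNIV. \<bar>dd p i\<bar>) * emeasure lborel ((\<lambda>x. (\<chi> i. s0$i + dd p i * x$i)) -` (torus \<inter> Q u -` cell p j))"
      using lborel_diag[of "dd p" "torus \<inter> Q u -` cell p j" s0] by simp
    also have "(\<lambda>x. (\<chi> i. s0$i + dd p i * x$i)) -` (torus \<inter> Q u -` cell p j) = {t. Econd p j u t}"
      unfolding affeq using E_char[OF p j u] by auto
    finally show ?thesis by (simp add: prodd)
  qed
  have "emeasure mu0 (cell p j \<inter> torus_ker L) = (\<Sum>u\<in>F0. c * emeasure lborel (torus \<inter> Q u -` (cell p j \<inter> torus_ker L)))"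
    unfolding c_def by (rule emeasure_mu0[OF cm])
  also have "\<dots> = (\<Sum>u\<in>F0. c * (ennreal ((1 / real p) ^ k) * emeasure lborel {t. Econd p j u t}))"
    by (rule sum.cong[OF refl], rule arg_cong[where f="\<lambda>x. c * x"], rule e3)
  also have "\<dots> = ennreal ((1 / real p) ^ k) * (\<Sum>u\<in>F0. c * emeasure lborel {t. Econd p j u t})"
    by (simp add: sum_distrib_left mult.left_commute)
  also have "(\<Sum>u\<in>F0. c * emeasure lborel {t. Econd p j u t}) = (\<Sum>u\<in>F0. c * (\<Sum>z\<in>Zs p j u. emeasure lborel (Tz z)))"
    by (rule sum.cong) (simp_all add: Econd_measure[OF p])
  finally have em: "emeasure mu0 (cell p j \<inter> torus_ker L) = ennreal ((1 / real p) ^ k) * (\<Sum>u\<in>F0. c * (\<Sum>z\<in>Zs p j u. emeasure lborel (Tz z)))" .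
  have "mu_L L (cell p j \<inter> torus_ker L) = enn2real (emeasure mu0 (cell p j \<inter> torus_ker L))"
    by (simp add: mu_L_def haar_eq measure_def)
  also have "\<dots> = (1 / real p) ^ k * enn2real (\<Sum>u\<in>F0. c * (\<Sum>z\<in>Zs p j u. emeasure lborel (Tz z)))"
    by (simp add: em enn2real_mult)
  finally have "lam L p j = real p ^ k * ((1 / real p) ^ k * enn2real (\<Sum>u\<in>F0. c * (\<Sum>z\<in>Zs p j u. emeasure lborel (Tz z))))"
    by (simp add: lam_def k_def)
  also have "\<dots> = enn2real (\<Sum>u\<in>F0. c * (\<Sum>z\<in>Zs p j u. emeasure lborel (Tz z)))"
    using p by (simp add: power_one_over field_simps)
  finally show ?thesis by (simp add: c_def)
qed

end

theorem lemma3p4: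
  fixes L :: "int^'m^'r"
  assumes "rank (realmat L) = CARD('r)"
  shows "\<exists>\<Lambda>::real set. finite \<Lambda> \<and> (\<forall>x\<in>\<Lambda>. x > 0) \<and>
    (\<exists>p0::int. \<forall>p::nat. int p \<ge> p0 \<longrightarrow>
       {lam L p j | j. j \<in> Zp_grid p \<and> div_vec j p \<in> J_set L p} \<subseteq> \<Lambda>)"
proof -
  obtain I :: "'m set" and R :: "real^'r^'m" where
    cardI: "card I = CARD('r)" and LR: "realmat L ** R = mat 1" and R0: "\<And>i. i \<notin> I \<Longrightarrow> R$i = 0"
    and inj: "\<And>u. (\<And>i. i \<notin> I \<Longrightarrow> u$i = 0) \<Longrightarrow> realmat L *v u = 0 \<Longrightarrow> u = 0"
    using LA_split[OF assms] by metis
  interpret tsetup L I R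
    by unfold_locales (use LR R0 inj in auto)
  define f where "f S = enn2real (\<Sum>u\<in>F0. ennreal (1 / real (card F0)) * (\<Sum>z\<in>S u. emeasure lborel (Tz z)))" for S
  define \<Lambda>0 where "\<Lambda>0 = f ` (Pi\<^sub>E F0 (\<lambda>_. Pow Zfin))"
  have fin: "finite \<Lambda>0" unfolding \<Lambda>0_def
    by (intro finite_imageI finite_PiE finite_F0) (simp add: finite_Zfin)
  have key: "lam L p j \<in> \<Lambda>0 \<and> lam L p j > 0"
    if p: "0 < p" and j: "j \<in> Zp_grid p" and J: "div_vec j p \<in> J_set L p" for p j
  proof
    have "lam L p j = f (restrict (Zs p j) F0)"
      unfolding lam_formula[OF cardI p j] f_def by (intro arg_cong[where f=enn2real] sum.cong) auto
    moreover have "restrict (Zs p j) F0 \<in> Pi\<^sub>E F0 (\<lambda>_. Pow Zfin)"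
      using Zs_Zfin by auto
    ultimately show "lam L p j \<in> \<Lambda>0" unfolding \<Lambda>0_def by blast
  next
    obtain j' where j': "div_vec j p = div_vec j' p" "j' \<in> Zp_grid p" "mu_L L (cell p j' \<inter> torus_ker L) > 0"
      using J by (auto simp: J_set_def)
    have "j' = j"
    proof -
      have "j'$i = j$i" for i
      proof -
        have "(div_vec j p)$i = (div_vec j' p)$i" using j'(1) by simp
        then have "real (j$i) / real p = real (j'$i) / real p" by (simp only: div_vec_def vec_lambda_beta)
        then have "real (j$i) = real (j'$i)" using p by (simp add: divide_cancel_right)
        then show ?thesis by simp
      qed
      then show ?thesis by (simp add: vec_eq_iff)
    qed
    then show "lam L p j > 0" using j'(3) p by (simp add: lam_def)
  qed
  show ?thesis
  proof (intro exI conjI)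
    show "finite {x \<in> \<Lambda>0. x > 0}" using fin by simp
    show "\<forall>x\<in>{x \<in> \<Lambda>0. x > 0}. x > 0" by simp
    show "\<forall>p::nat. int p \<ge> 1 \<longrightarrow> {lam L p j | j. j \<in> Zp_grid p \<and> div_vec j p \<in> J_set L p} \<subseteq> {x \<in> \<Lambda>0. x > 0}"
      using key by fastforce
  qed
qed


end
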